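(* Let $q$ be a prime power and $s$ an odd integer, and let $G$ be an abelian group with $|G|=(q^s+1)(q^{2s}+1)$ which contains a difference set with parameters \[ (v,k,\lambda)=\left(\frac{q^{4s}-1}{q^s-1},\frac{q^{3s}-1}{q^s-1},\frac{q^{2s}-1}{q^s-1}\right). \] Let $\tau$ be the automorphism $\tau:x\mapsto x^{q^4}$ of $G$, and let $G^\tau$ denote the subgroup of fixed points of $\tau$. Let $M$ be any subgroup of $G$ of order $(q+1)(q^2+1)$. Then $M\le G^\tau$. Furthermore, let $b=\gcd(q+1,s)$ and $c=\gcd(q^2+1,s)$; if the Sylow $r$-subgroup of $G$ is cyclic for every prime $r$ dividing $b$ or $c$, then $M=G^\tau$.
   Context: A $(v,k,\lambda)$-difference set in an abelian group $G$ of order $v$ is a $k$-subset $D$ such that every non-identity element of $G$ is of the form $d_1d_2^{-1}$ with $d_1,d_2\in D$ in exactly $\lambda$ ways. *)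

theory Defs
  imports "HOL-Algebra.Algebra" "HOL-Computational_Algebra.Primes"
begin

definition difference_set :: "('a, 'b) monoid_scheme \<Rightarrow> 'a set \<Rightarrow> nat \<Rightarrow> nat \<Rightarrow> nat \<Rightarrow> bool" where
  "difference_set G D v k lam \<longleftrightarrow>
     card (carrier G) = v \<and> D \<subseteq> carrier G \<and> card D = k \<and>
     (\<forall>g \<in> carrier G - {\<one>\<^bsub>G\<^esub>}.
        card {(d1, d2). d1 \<in> D \<and> d2 \<in> D \<and> d1 \<otimes>\<^bsub>G\<^esub> inv\<^bsub>G\<^esub> d2 = g} = lam)"

definition prime_power :: "nat \<Rightarrow> bool" where
  "prime_power q \<longleftrightarrow> (\<exists>p n. Factorial_Ring.prime (p::nat) \<and> n \<ge> 1 \<and> q = p ^ n)"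

definition pow_fixed :: "('a, 'b) monoid_scheme \<Rightarrow> nat \<Rightarrow> 'a set" where
  "pow_fixed G q = {x \<in> carrier G. x [^]\<^bsub>G\<^esub> (q ^ 4) = x}"

definition sylow_subgroup :: "('a, 'b) monoid_scheme \<Rightarrow> nat \<Rightarrow> 'a set \<Rightarrow> bool" where
  "sylow_subgroup G r P \<longleftrightarrow> subgroup P G \<and> card P = r ^ multiplicity r (order G)"

end

theory Submission
  imports Defs "HOL-Number_Theory.Cong"
begin


lemma geom_int: "(1 - (z::int)) * (\<Sum>i<n. z^i) = 1 - z^n"
  by (simp add: one_diff_power_eq)

lemma alt_sum: assumes "odd s" shows "(\<Sum>i<s. (-1::int)^i) = 1"
proof -
  have "(1 - (-1::int)) * (\<Sum>i<s. (-1)^i) = 1 - (-1)^s" by (rule geom_int)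
  also have "\<dots> = 2" using assms by simp
  finally show ?thesis by simp
qed

lemma cong_gsum: assumes "[x = c] (mod d)"
  shows "[(\<Sum>i<s. (-x)^i) = (\<Sum>i<s. (-c)^i)] (mod (d::int))"
  by (intro cong_sum cong_pow) (simp add: assms cong_minus_minus_iff)

lemma NT:
  fixes q s :: nat
  assumes q1: "q \<ge> 1" and s: "odd s"
  shows "\<exists>t. (q^s+1)*(q^(2*s)+1) = (q+1)*(q^2+1)*t \<and> coprime (q-1) t \<and>
     (\<forall>p. Factorial_Ring.prime p \<and> p dvd (q+1)*(q^2+1) \<and> p dvd t \<longrightarrow> p dvd gcd (q+1) s \<or> p dvd gcd (q^2+1) s)"
proof -
  define x where "x = int q"
  define A where "A = (\<Sum>i<s. (-x)^i)"
  define B where "B = (\<Sum>i<s. (-(x^2))^i)"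
  have x0: "x \<ge> 1" using q1 x_def by simp
  have odd_pow: "(- y)^s = - (y^s)" for y :: int using s by (simp add: power_minus_odd)
  have hA: "(x+1) * A = x^s + 1"
    using geom_int[of "-x" s] odd_pow[of x] unfolding A_def by (simp add: ac_simps)
  have hB: "(x^2+1) * B = x^(2*s) + 1"
    using geom_int[of "-(x^2)" s] odd_pow[of "x^2"] unfolding B_def by (simp add: ac_simps flip: power_mult)
  have Apos: "A > 0"
  proof -
    have "(x+1) * A > 0" using hA x0 by (simp add: add_pos_nonneg)
    thus ?thesis using x0 by (simp add: zero_less_mult_iff)
  qed
  have Bpos: "B > 0"
  proof -
    have "(x^2+1) * B > 0" using hB x0 by (simp add: add_pos_nonneg)
    thus ?thesis using x0 by (smt (verit) zero_less_mult_iff zero_le_power2)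
  qed
  define t where "t = nat (A*B)"
  have tI: "int t = A * B" using Apos Bpos t_def by simp
  have eq: "(q^s+1)*(q^(2*s)+1) = (q+1)*(q^2+1)*t"
  proof -
    have "int ((q^s+1)*(q^(2*s)+1)) = (x^s+1)*(x^(2*s)+1)" by (simp add: x_def algebra_simps)
    also have "\<dots> = ((x+1)*A)*((x^2+1)*B)" using hA hB by simp
    also have "\<dots> = (x+1)*(x^2+1)*(A*B)" by (simp add: algebra_simps)
    also have "\<dots> = int ((q+1)*(q^2+1)*t)" by (simp add: x_def tI algebra_simps)
    finally show ?thesis by (simp only: of_nat_eq_iff)
  qed
  have F1: "\<not> p dvd A \<and> \<not> p dvd B" if "Factorial_Ring.prime (p::int)" "[x = 1] (mod p)" for p
  proof -
    have "[A = (\<Sum>i<s. (-1)^i)] (mod p)" unfolding A_def using cong_gsum[OF that(2)] by simp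
    hence cA: "[A = 1] (mod p)" using alt_sum[OF s] by simp
    have "[x^2 = 1] (mod p)" using cong_pow[OF that(2), of 2] by simp
    hence "[B = (\<Sum>i<s. (-1)^i)] (mod p)" unfolding B_def using cong_gsum by fastforce
    hence cB: "[B = 1] (mod p)" using alt_sum[OF s] by simp
    have np: "\<not> p dvd 1" using that(1) not_prime_unit by blast
    show ?thesis using cA cB np
      by (metis cong_0_iff cong_sym cong_trans)
  qed
  have F2: "[A = int s] (mod p) \<and> \<not> p dvd B" if "Factorial_Ring.prime (p::int)" "[x = -1] (mod p)" for p
  proof -
    have "[A = (\<Sum>i<s. (- (-1))^i)] (mod p)" unfolding A_def using cong_gsum[OF that(2)] by simp
    hence cA: "[A = int s] (mod p)" by simp
    have "[x^2 = 1] (mod p)" using cong_pow[OF that(2), of 2] by simp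
    hence "[B = (\<Sum>i<s. (-1)^i)] (mod p)" unfolding B_def using cong_gsum by fastforce
    hence cB: "[B = 1] (mod p)" using alt_sum[OF s] by simp
    have np: "\<not> p dvd 1" using that(1) not_prime_unit by blast
    show ?thesis using cA cB np
      by (metis cong_0_iff cong_sym cong_trans)
  qed
  have F3: "[B = int s] (mod p) \<and> (p dvd A \<longrightarrow> [x = -1] (mod p))"
    if p: "Factorial_Ring.prime (p::int)" and x2: "[x^2 = -1] (mod p)" for p
  proof -
    have "[B = (\<Sum>i<s. (- (-1))^i)] (mod p)" unfolding B_def using cong_gsum[OF x2] by simp
    hence cB: "[B = int s] (mod p)" by simp
    have "p dvd A \<longrightarrow> [x = -1] (mod p)"
    proof
      assume pA: "p dvd A"
      hence "p dvd x^s + 1" using hA by (metis dvd_mult)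
      hence c1: "[x^s = -1] (mod p)" by (simp add: cong_iff_dvd_diff)
      obtain k where k: "s = 2*k+1" using s oddE by blast
      have "x^s = x * (x^2)^k" by (simp add: k power_mult)
      moreover have "[x * (x^2)^k = x * (-1)^k] (mod p)"
        by (intro cong_mult cong_pow x2 cong_refl)
      ultimately have c2: "[x * (-1)^k = -1] (mod p)" using c1 by (metis cong_sym cong_trans)
      show "[x = -1] (mod p)"
      proof (cases "even k")
        case True thus ?thesis using c2 by simp
      next
        case False
        hence "[-x = -1] (mod p)" using c2 by simp
        hence "[x = 1] (mod p)" using cong_minus_minus_iff by fastforce
        thus ?thesis using F1[OF p] pA by blast
      qed
    qed
    thus ?thesis using cB by blast
  qed
  have cop: "coprime (q-1) t"
  proof (rule ccontr)
    assume "\<not> coprime (q-1) t"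
    hence "gcd (q-1) t \<noteq> 1" by (simp add: coprime_iff_gcd_eq_1)
    then obtain p where p: "Factorial_Ring.prime p" "p dvd gcd (q-1) t" using prime_factor_nat by blast
    have pi: "Factorial_Ring.prime (int p)" using p(1) by simp
    have "int p dvd int (q-1)" using p(2) by simp
    hence "[x = 1] (mod int p)" using q1 by (simp add: cong_iff_dvd_diff x_def of_nat_diff)
    moreover have "int p dvd A * B" using p(2) tI by (metis gcd_dvd2 dvd_trans of_nat_dvd_iff)
    hence "int p dvd A \<or> int p dvd B" using pi prime_dvd_mult_iff by blast
    ultimately show False using F1[OF pi] by blast
  qed
  have bad: "p dvd gcd (q+1) s \<or> p dvd gcd (q^2+1) s"
    if p: "Factorial_Ring.prime p" "p dvd (q+1)*(q^2+1)" "p dvd t" for p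
  proof -
    have pi: "Factorial_Ring.prime (int p)" using p(1) by simp
    have "int p dvd A * B" using p(3) tI by (metis of_nat_dvd_iff)
    hence AB: "int p dvd A \<or> int p dvd B" using pi prime_dvd_mult_iff by blast
    have "p dvd q+1 \<or> p dvd q^2+1" using p(1,2) prime_dvd_mult_iff by blast
    thus ?thesis
    proof
      assume h: "p dvd q+1"
      hence "int p dvd x + 1" unfolding x_def by (metis of_nat_1 of_nat_add of_nat_dvd_iff)
      hence "[x = -1] (mod int p)" by (simp add: cong_iff_dvd_diff)
      with F2[OF pi] AB have "[A = int s] (mod int p)" "int p dvd A" by auto
      hence "int p dvd int s" by (metis cong_dvd_iff)
      thus ?thesis using h by simp
    next
      assume h: "p dvd q^2+1"
      hence "int p dvd x^2 + 1" unfolding x_def by (metis of_nat_1 of_nat_add of_nat_dvd_iff of_nat_power)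
      hence x2: "[x^2 = -1] (mod int p)" by (simp add: cong_iff_dvd_diff)
      show ?thesis using AB
      proof
        assume "int p dvd A"
        hence "[x = -1] (mod int p)" using F3[OF pi x2] by blast
        hence "int p dvd x + 1" by (simp add: cong_iff_dvd_diff)
        hence h1: "p dvd q + 1" unfolding x_def by (metis of_nat_1 of_nat_add of_nat_dvd_iff)
        from F2[OF pi \<open>[x = -1] (mod int p)\<close>] have "[A = int s] (mod int p)" by blast
        hence "int p dvd int s" using \<open>int p dvd A\<close> by (metis cong_dvd_iff)
        thus ?thesis using h1 by simp
      next
        assume "int p dvd B"
        hence "int p dvd int s" using F3[OF pi x2] by (metis cong_dvd_iff)
        thus ?thesis using h by simp
      qed
    qed
  qed
  show ?thesis using eq cop bad by blast
qed


lemma lemA: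
  assumes cg: "comm_group G" and fin: "finite (carrier G)" and M: "subgroup M G"
    and ord: "order G = card M * t"
    and x: "x \<in> carrier G" and xn: "x [^]\<^bsub>G\<^esub> (n::nat) = \<one>\<^bsub>G\<^esub>" and cop: "coprime n t"
  shows "x \<in> M"
proof -
  interpret comm_group G by (rule cg)
  have nM: "normal M G" using M subgroup_imp_normal by blast
  have grp: "group (G Mod M)" using nM normal.factorgroup_is_group by blast
  have hom: "(\<lambda>a. M #>\<^bsub>G\<^esub> a) \<in> hom G (G Mod M)" using nM normal.r_coset_hom_Mod by blast
  have cMpos: "card M > 0"
    using M fin by (metis card_0_eq finite_subset subgroup.one_closed subgroup.subset empty_iff gr0I)
  have "card (rcosets\<^bsub>G\<^esub> M) * card M = order G" using lagrange[OF M] .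
  hence ordQ: "order (G Mod M) = t" using ord cMpos by (simp add: order_def FactGroup_def)
  let ?e = "M #>\<^bsub>G\<^esub> x"
  have e: "?e \<in> carrier (G Mod M)" using hom x by (simp add: hom_def Pi_def)
  have "?e [^]\<^bsub>G Mod M\<^esub> n = M #>\<^bsub>G\<^esub> (x [^]\<^bsub>G\<^esub> n)"
    using hom_nat_pow[OF hom x is_group grp] by simp
  also have "\<dots> = M" using xn M by (simp add: coset_mult_one subgroup.subset)
  finally have e1: "?e [^]\<^bsub>G Mod M\<^esub> n = \<one>\<^bsub>G Mod M\<^esub>" by simp
  have e2: "?e [^]\<^bsub>G Mod M\<^esub> t = \<one>\<^bsub>G Mod M\<^esub>"
    using group.pow_order_eq_1[OF grp e] ordQ by simp
  have "group.ord (G Mod M) ?e dvd n" "group.ord (G Mod M) ?e dvd t"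
    using group.pow_eq_id[OF grp e] e1 e2 by auto
  hence "group.ord (G Mod M) ?e dvd 1" using cop by (metis coprime_iff_gcd_eq_1 gcd_greatest)
  hence "group.ord (G Mod M) ?e = 1" by simp
  hence "?e = \<one>\<^bsub>G Mod M\<^esub>" using group.ord_eq_1[OF grp e] by simp
  hence "?e = M" by simp
  thus ?thesis using rcos_self[OF x M] by simp
qed



lemma pow_card_sub:
  assumes "group G" "subgroup Q G" "z \<in> Q"
  shows "z [^]\<^bsub>G\<^esub> card Q = \<one>\<^bsub>G\<^esub>"
proof -
  interpret group G by fact
  have g: "group (G\<lparr>carrier := Q\<rparr>)" using subgroup_imp_group[OF assms(2)] .
  have "z [^]\<^bsub>G\<lparr>carrier := Q\<rparr>\<^esub> order (G\<lparr>carrier := Q\<rparr>) = \<one>\<^bsub>G\<lparr>carrier := Q\<rparr>\<^esub>"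
    using group.pow_order_eq_1[OF g] assms(3) by simp
  thus ?thesis by (simp add: order_def flip: nat_pow_consistent)
qed

lemma lt_eq: "(N::nat) > 0 \<Longrightarrow> {..<N} = {0..N - 1}" by auto

lemma cyc_count:
  assumes grp: "group G" and fin: "finite (carrier G)" and P: "subgroup P G"
    and cyc: "cyclic_group (subgroup_generated G P)" and cP: "card P = p^e" and pp: "p > 0"
    and ae: "a \<le> e"
  shows "card {y \<in> P. y [^]\<^bsub>G\<^esub> (p^a) = \<one>\<^bsub>G\<^esub>} \<le> p^a"
proof -
  interpret group G by fact
  let ?H = "subgroup_generated G P"
  have gH: "group ?H" by (rule group_subgroup_generated)
  have cH: "carrier ?H = P" using P by (simp add: subgroup.carrier_subgroup_generated_subgroup)
  obtain g where g: "g \<in> carrier ?H" "subgroup_generated ?H {g} = ?H"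
    using cyc unfolding cyclic_group_def by blast
  have "group.ord ?H g = order (subgroup_generated ?H {g})"
    using group.cyclic_order_is_ord[OF gH g(1)] .
  also have "\<dots> = card P" using g(2) cH by (simp add: order_def)
  finally have o1: "group.ord ?H g = card P" .
  have "group.ord ?H g = ord g"
    by (simp add: group.ord_def[OF gH] ord_def pow_subgroup_generated)
  with o1 cP have og: "ord g = p^e" by simp
  have gP: "g \<in> P" using g(1) cH by simp
  have gG: "g \<in> carrier G" using gP P subgroup.subset by blast
  let ?S = "(\<lambda>j. g [^]\<^bsub>G\<^esub> j) ` {..<p^e}"
  have gpow: "g [^]\<^bsub>G\<^esub> (j::nat) \<in> P" for j
    using monoid.nat_pow_closed[OF group.is_monoid[OF gH] g(1), of j] cH by (simp add: pow_subgroup_generated)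
  have SP: "?S \<subseteq> P" using gpow by auto
  have pe: "p^e > 0" using pp by simp
  have "{..<p^e} = {0..ord g - 1}" using og lt_eq[OF pe] by simp
  hence inj: "inj_on (\<lambda>j. g [^]\<^bsub>G\<^esub> j) {..<p^e}" using ord_inj[OF gG] by simp
  have "card ?S = p^e" using card_image[OF inj] by simp
  hence SeqP: "?S = P" using SP cP fin P
    by (metis card_subset_eq finite_subset subgroup.subset)
  define T where "T = {y \<in> P. y [^]\<^bsub>G\<^esub> (p^a) = \<one>\<^bsub>G\<^esub>}"
  have "T \<subseteq> (\<lambda>i. g [^]\<^bsub>G\<^esub> (i * p^(e-a))) ` {..<p^a}"
  proof
    fix y assume y: "y \<in> T"
    hence "y \<in> ?S" using SeqP T_def by blast
    then obtain j where j: "j < p^e" "y = g [^]\<^bsub>G\<^esub> j" by auto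
    have "g [^]\<^bsub>G\<^esub> (j * p^a) = \<one>\<^bsub>G\<^esub>" using y j by (simp add: T_def nat_pow_pow gG)
    hence "p^e dvd j * p^a" using pow_eq_id[OF gG] og by simp
    moreover have "p^e = p^(e-a) * p^a" using ae by (simp flip: power_add)
    ultimately have "p^(e-a) dvd j" using pp by simp
    then obtain i where i: "j = p^(e-a) * i" by blast
    have "i < p^a"
    proof (rule ccontr)
      assume "\<not> i < p^a"
      hence "p^(e-a) * p^a \<le> p^(e-a) * i" by simp
      thus False using j(1) i \<open>p^e = p^(e-a) * p^a\<close> by simp
    qed
    thus "y \<in> (\<lambda>i. g [^]\<^bsub>G\<^esub> (i * p^(e-a))) ` {..<p^a}" using i j by (auto simp: mult.commute)
  qed
  hence "card T \<le> card ((\<lambda>i. g [^]\<^bsub>G\<^esub> (i * p^(e-a))) ` {..<p^a})" by (simp add: card_mono)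
  also have "\<dots> \<le> p^a" using card_image_le[of "{..<p^a}"] by simp
  finally show ?thesis by (simp add: T_def)
qed



lemma lemB:
  assumes cg: "comm_group G" and fin: "finite (carrier G)" and M: "subgroup M G"
    and ord: "order G = card M * t"
    and hyp: "\<forall>p. Factorial_Ring.prime p \<and> p dvd card M \<and> p dvd t \<longrightarrow>
              (\<forall>P. sylow_subgroup G p P \<longrightarrow> cyclic_group (subgroup_generated G P))"
    and p: "Factorial_Ring.prime p" and y: "y \<in> carrier G"
    and yp: "y [^]\<^bsub>G\<^esub> (p ^ multiplicity p (card M)) = \<one>\<^bsub>G\<^esub>"
  shows "y \<in> M"
proof -
  interpret comm_group G by (rule cg)
  define m where "m = card M"
  define a where "a = multiplicity p m"
  show ?thesis
  proof (cases "coprime (p^a) t")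
    case True
    thus ?thesis using lemA[OF cg fin M ord y] yp a_def m_def by blast
  next
    case False
    have pt: "p dvd t" using False p
      by (metis coprime_power_left_iff prime_imp_coprime)
    have a0: "a > 0" using False by (metis coprime_1_left gr0I power_0)
    have pm: "p dvd m" using a0 by (metis a_def dvd_power dvd_trans multiplicity_dvd)
    have Gpos: "order G > 0" using fin by (simp add: order_gt_0_iff_finite)
    define e where "e = multiplicity p (order G)"
    have oG: "order G = p^e * (order G div p^e)" by (simp add: e_def multiplicity_dvd)
    obtain P where P: "subgroup P G" "card P = p^e"
      using sylow_thm[OF p is_group oG fin] by blast
    have syl: "sylow_subgroup G p P" using P by (simp add: sylow_subgroup_def e_def)
    have cyc: "cyclic_group (subgroup_generated G P)" using hyp p pm pt syl m_def by blast
    have gM: "group (G\<lparr>carrier := M\<rparr>)" using subgroup_imp_group[OF M] .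
    have finM: "finite M" using fin M by (meson finite_subset subgroup.subset)
    have oM: "order (G\<lparr>carrier := M\<rparr>) = p^a * (m div p^a)"
      by (simp add: order_def m_def a_def multiplicity_dvd)
    obtain Q where Q: "subgroup Q (G\<lparr>carrier := M\<rparr>)" "card Q = p^a"
      using sylow_thm[OF p gM oM] finM by auto
    have QM: "Q \<subseteq> M" using subgroup.subset[OF Q(1)] by simp
    have "group (G\<lparr>carrier := Q\<rparr>)"
      using group.subgroup_imp_group[OF gM Q(1)] by simp
    hence QG: "subgroup Q G" using group_incl_imp_subgroup QM M subgroup.subset by blast
    have "p^a dvd order G" using ord m_def a_def by (metis dvd_mult2 multiplicity_dvd)
    hence ae: "a \<le> e" using Gpos p unfolding e_def by (metis multiplicity_geI not_prime_unit less_not_refl2)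
    have inP: "z \<in> P" if z: "z \<in> carrier G" "z [^]\<^bsub>G\<^esub> (p^a) = \<one>\<^bsub>G\<^esub>" for z
    proof -
      have "\<not> p dvd (order G div p^e)" unfolding e_def using multiplicity_decompose Gpos p by (metis not_prime_unit less_not_refl2)
      hence "coprime p (order G div p^e)" using p by (simp add: prime_imp_coprime)
      hence "coprime (p^a) (order G div p^e)" by simp
      moreover have "order G = card P * (order G div p^e)" using oG P by simp
      ultimately show ?thesis using lemA[OF cg fin P(1) _ z] by blast
    qed
    define T where "T = {z \<in> P. z [^]\<^bsub>G\<^esub> (p^a) = \<one>\<^bsub>G\<^esub>}"
    have finT: "finite T" using fin P(1) T_def by (metis (no_types, lifting) finite_subset mem_Collect_eq subgroup.subset subsetI)
    have cT: "card T \<le> p^a"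
      using cyc_count[OF is_group fin P(1) cyc P(2) _ ae] p prime_gt_0_nat T_def by blast
    have QT: "Q \<subseteq> T"
    proof
      fix z assume z: "z \<in> Q"
      have zG: "z \<in> carrier G" using z QG subgroup.subset by blast
      have "z [^]\<^bsub>G\<^esub> (p^a) = \<one>\<^bsub>G\<^esub>" using pow_card_sub[OF is_group QG z] Q(2) by simp
      thus "z \<in> T" using inP zG T_def by blast
    qed
    have "Q = T" using card_seteq[OF finT QT] cT Q(2) by simp
    moreover have "y \<in> T" using inP y yp T_def a_def m_def by blast
    ultimately show ?thesis using QM by blast
  qed
qed



lemma sub_pow:
  assumes "group G" "subgroup M G" "z \<in> M"
  shows "z [^]\<^bsub>G\<^esub> (k::nat) \<in> M"
proof (induction k)
  case 0 thus ?case using assms subgroup.one_closed by simp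
next
  case (Suc k)
  have zG: "z \<in> carrier G" using assms subgroup.subset by blast
  have "z [^]\<^bsub>G\<^esub> Suc k = z [^]\<^bsub>G\<^esub> k \<otimes>\<^bsub>G\<^esub> z"
    using group.is_monoid[OF assms(1)] zG by (simp add: monoid.nat_pow_Suc)
  thus ?case using Suc assms subgroup.m_closed by metis
qed

lemma lemC:
  assumes cg: "comm_group G" and fin: "finite (carrier G)" and M: "subgroup M G"
    and ord: "order G = card M * t"
    and hyp: "\<forall>p. Factorial_Ring.prime p \<and> p dvd card M \<and> p dvd t \<longrightarrow>
              (\<forall>P. sylow_subgroup G p P \<longrightarrow> cyclic_group (subgroup_generated G P))"
  shows "n dvd card M \<Longrightarrow> y \<in> carrier G \<Longrightarrow> y [^]\<^bsub>G\<^esub> n = \<one>\<^bsub>G\<^esub> \<Longrightarrow> y \<in> M"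
proof (induction n arbitrary: y rule: less_induct)
  case (less n)
  interpret comm_group G by (rule cg)
  have cMpos: "card M > 0"
    using M fin by (metis card_0_eq finite_subset subgroup.one_closed subgroup.subset empty_iff gr0I)
  have n0: "n \<noteq> 0" using less.prems(1) cMpos by auto
  show ?case
  proof (cases "n = 1")
    case True
    hence "y = \<one>\<^bsub>G\<^esub>" using less.prems by simp
    thus ?thesis using M subgroup.one_closed by blast
  next
    case False
    then obtain p where p: "Factorial_Ring.prime p" "p dvd n" using prime_factor_nat by blast
    define k where "k = multiplicity p n"
    have pnu: "\<not> is_unit p" using p(1) not_prime_unit by blast
    obtain n' where n': "n = p^k * n'" "\<not> p dvd n'"
      using multiplicity_decompose'[OF n0 pnu] k_def by blast
    have k1: "k \<ge> 1" using p(2) n0 pnu unfolding k_def by (metis multiplicity_geI power_one_right)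
    have p2: "p \<ge> 2" using p(1) prime_ge_2_nat by blast
    have "p^k \<ge> 2" using p2 k1 by (metis le_trans self_le_power not_one_le_zero le_add_diff_inverse2 one_le_numeral power_one_right power_increasing)
    moreover have "n' > 0" using n0 n' by (auto intro: gr0I)
    ultimately have n'lt: "n' < n" using n'(1) by simp
    have yG: "y \<in> carrier G" by (rule less.prems(2))
    define y1 where "y1 = y [^]\<^bsub>G\<^esub> (p^k)"
    have y1G: "y1 \<in> carrier G" using yG y1_def by simp
    have "y1 [^]\<^bsub>G\<^esub> n' = \<one>\<^bsub>G\<^esub>"
      using less.prems(3) n'(1) yG by (simp add: y1_def nat_pow_pow)
    moreover have "n' dvd card M" using less.prems(1) n'(1) by (metis dvd_mult_right dvd_trans)
    ultimately have y1M: "y1 \<in> M" using less.IH[OF n'lt] y1G by blast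
    define y2 where "y2 = y [^]\<^bsub>G\<^esub> n'"
    have y2G: "y2 \<in> carrier G" using yG y2_def by simp
    define am where "am = multiplicity p (card M)"
    have "p^k dvd card M" using less.prems(1) n'(1) by (metis dvd_mult2 dvd_trans dvd_refl)
    hence "k \<le> am" using cMpos pnu unfolding am_def by (metis multiplicity_geI less_not_refl2)
    hence "p^k dvd p^am" by (simp add: le_imp_power_dvd)
    hence "n dvd n' * p^am" using n'(1) by (simp add: mult.commute mult_dvd_mono)
    moreover have "ord y dvd n" using less.prems(3) pow_eq_id[OF yG] by simp
    ultimately have "ord y dvd n' * p^am" by (rule dvd_trans[rotated])
    hence "y2 [^]\<^bsub>G\<^esub> (p^am) = \<one>\<^bsub>G\<^esub>"
      using pow_eq_id[OF yG] yG by (simp add: y2_def nat_pow_pow[OF yG])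
    hence y2M: "y2 \<in> M" using lemB[OF cg fin M ord hyp p(1) y2G] am_def by blast
    have cop: "coprime (p^k) n'" using n'(2) p(1) by (simp add: prime_imp_coprime)
    obtain uu vv where XY: "p^k * uu = n' * vv + GCD.gcd (p^k) n'"
      using bezout_nat[of "p^k" n'] p2 by auto
    hence XY': "p^k * uu = n' * vv + 1" using cop by (simp add: coprime_iff_gcd_eq_1)
    have "y1 [^]\<^bsub>G\<^esub> uu = y [^]\<^bsub>G\<^esub> (n' * vv + 1)"
      using XY' yG by (simp add: y1_def nat_pow_pow)
    also have "\<dots> = y2 [^]\<^bsub>G\<^esub> vv \<otimes>\<^bsub>G\<^esub> y"
      using yG by (simp add: y2_def nat_pow_pow nat_pow_mult[symmetric])
    finally have eq: "y1 [^]\<^bsub>G\<^esub> uu = y2 [^]\<^bsub>G\<^esub> vv \<otimes>\<^bsub>G\<^esub> y" .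
    have a: "y1 [^]\<^bsub>G\<^esub> uu \<in> M" using sub_pow[OF is_group M y1M] .
    have b: "y2 [^]\<^bsub>G\<^esub> vv \<in> M" using sub_pow[OF is_group M y2M] .
    have y2YG: "y2 [^]\<^bsub>G\<^esub> vv \<in> carrier G" using y2G by simp
    have "y = inv\<^bsub>G\<^esub> (y2 [^]\<^bsub>G\<^esub> vv) \<otimes>\<^bsub>G\<^esub> (y1 [^]\<^bsub>G\<^esub> uu)"
      using eq y2YG yG by (simp add: m_assoc[symmetric])
    thus ?thesis using a b M by (metis subgroup.m_closed subgroup.m_inv_closed)
  qed
qed



lemma q4: "(q::nat) \<ge> 1 \<Longrightarrow> q^4 = (q-1)*((q+1)*(q^2+1)) + 1"
proof -
  assume "q \<ge> 1"
  then obtain r where "q = Suc r" by (metis Suc_le_D One_nat_def)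
  thus ?thesis by (simp add: algebra_simps power2_eq_square power4_eq_xxxx)
qed

theorem lemma4p1:
  fixes G :: "('a, 'b) monoid_scheme" and q s :: nat and M :: "'a set"
  assumes "prime_power q"
    and "odd s"
    and "comm_group G"
    and "finite (carrier G)"
    and "order G = (q ^ s + 1) * (q ^ (2 * s) + 1)"
    and "\<exists>D. difference_set G D
            ((q ^ (4 * s) - 1) div (q ^ s - 1))
            ((q ^ (3 * s) - 1) div (q ^ s - 1))
            ((q ^ (2 * s) - 1) div (q ^ s - 1))"
    and "subgroup M G"
    and "card M = (q + 1) * (q ^ 2 + 1)"
  shows "M \<subseteq> pow_fixed G q
    \<and> ((\<forall>r. Factorial_Ring.prime (r::nat) \<and> (r dvd gcd (q + 1) s \<or> r dvd gcd (q ^ 2 + 1) s) \<longrightarrow>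
            (\<forall>P. sylow_subgroup G r P \<longrightarrow> cyclic_group (subgroup_generated G P)))
         \<longrightarrow> M = pow_fixed G q)"
proof -
  note cg = assms(3) and fin = assms(4) and oG = assms(5) and M = assms(7) and cM = assms(8)
  interpret comm_group G by (rule cg)
  define m where "m = (q + 1) * (q ^ 2 + 1)"
  have xm: "x [^]\<^bsub>G\<^esub> m = \<one>\<^bsub>G\<^esub>" if "x \<in> M" for x
    using pow_card_sub[OF is_group M that] cM m_def by simp
  have part1: "M \<subseteq> pow_fixed G q"
  proof
    fix x assume x: "x \<in> M"
    have xG: "x \<in> carrier G" using x M subgroup.subset by blast
    show "x \<in> pow_fixed G q"
    proof (cases "q = 0")
      case True
      hence "x = \<one>\<^bsub>G\<^esub>" using xm[OF x] xG m_def by simp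
      thus ?thesis using True by (simp add: pow_fixed_def)
    next
      case False
      hence "q^4 = (q-1)*m + 1" using q4 m_def by simp
      hence "x [^]\<^bsub>G\<^esub> (q^4) = (x [^]\<^bsub>G\<^esub> m) [^]\<^bsub>G\<^esub> (q-1) \<otimes>\<^bsub>G\<^esub> x"
        using xG by (simp add: nat_pow_pow mult.commute nat_pow_mult[symmetric])
      also have "\<dots> = x" using xm[OF x] xG by simp
      finally show ?thesis using xG by (simp add: pow_fixed_def)
    qed
  qed
  have part2: "pow_fixed G q \<subseteq> M"
    if hyp0: "\<forall>r. Factorial_Ring.prime (r::nat) \<and> (r dvd gcd (q + 1) s \<or> r dvd gcd (q ^ 2 + 1) s) \<longrightarrow>
            (\<forall>P. sylow_subgroup G r P \<longrightarrow> cyclic_group (subgroup_generated G P))"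
  proof
    fix x assume x: "x \<in> pow_fixed G q"
    hence xG: "x \<in> carrier G" and xq: "x [^]\<^bsub>G\<^esub> (q^4) = x" by (auto simp: pow_fixed_def)
    show "x \<in> M"
    proof (cases "q = 0")
      case True
      hence "x = \<one>\<^bsub>G\<^esub>" using xq by simp
      thus ?thesis using M subgroup.one_closed by blast
    next
      case False
      hence q1: "q \<ge> 1" by simp
      obtain t where t: "(q^s+1)*(q^(2*s)+1) = (q+1)*(q^2+1)*t" "coprime (q-1) t"
        "\<forall>p. Factorial_Ring.prime p \<and> p dvd (q+1)*(q^2+1) \<and> p dvd t \<longrightarrow> p dvd gcd (q+1) s \<or> p dvd gcd (q^2+1) s"
        using NT[OF q1 assms(2)] by blast
      have ordGt: "order G = card M * t" using oG t(1) cM by simp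
      have hyp: "\<forall>p. Factorial_Ring.prime p \<and> p dvd card M \<and> p dvd t \<longrightarrow>
              (\<forall>P. sylow_subgroup G p P \<longrightarrow> cyclic_group (subgroup_generated G P))"
      proof (intro allI impI)
        fix p P assume h: "Factorial_Ring.prime p \<and> p dvd card M \<and> p dvd t" "sylow_subgroup G p P"
        have "p dvd gcd (q+1) s \<or> p dvd gcd (q^2+1) s" using t(3) h(1) cM by metis
        thus "cyclic_group (subgroup_generated G P)" using hyp0 h by metis
      qed
      have q4m: "q^4 = (q-1)*m + 1" using q4 q1 m_def by simp
      have "x [^]\<^bsub>G\<^esub> ((q-1)*m) \<otimes>\<^bsub>G\<^esub> x = \<one>\<^bsub>G\<^esub> \<otimes>\<^bsub>G\<^esub> x"
        using xq xG q4m by (simp add: nat_pow_mult[symmetric])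
      hence "x [^]\<^bsub>G\<^esub> ((q-1)*m) = \<one>\<^bsub>G\<^esub>" using xG by (metis nat_pow_closed one_closed r_cancel)
      hence d1: "ord x dvd (q-1)*m" using pow_eq_id[OF xG] by simp
      have d2: "ord x dvd m * t" using ord_dvd_group_order[OF xG] ordGt cM m_def by simp
      have "ord x dvd gcd (m*(q-1)) (m*t)" using d1 d2 by (simp add: mult.commute)
      also have "gcd (m*(q-1)) (m*t) = m * gcd (q-1) t" by (simp add: gcd_mult_distrib_nat)
      also have "\<dots> = m" using t(2) by (simp add: coprime_iff_gcd_eq_1)
      finally have xm': "x [^]\<^bsub>G\<^esub> m = \<one>\<^bsub>G\<^esub>" using pow_eq_id[OF xG] by simp
      have md: "m dvd card M" using cM m_def by simp
      show ?thesis by (rule lemC[OF cg fin M ordGt hyp md xG xm'])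
    qed
  qed
  show ?thesis using part1 part2 by blast
qed


end
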